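(* Let $a_1,a_2\in\mathbb{R}$ with $|a_1a_2|=1$, $a_2>0$ and $a_1<0$, and let $$R=\begin{pmatrix} 1 & a_1 \\ a_2 & 1 \end{pmatrix}.$$ Then for every driving function $f$ the Skorokhod problem with matrix $R$ has a unique solution.
   Context: For $b=(b_1,b_2)\in\mathbb{R}^2$ write $b\ge 0$ if $b_1\ge 0$ and $b_2\ge 0$, and let $D=\{b\in\mathbb{R}^2: b\ge 0\}$. A driving function is a continuous function $f:[0,\infty)\to\mathbb{R}^2$ with $f(0)\ge 0$. Given a real $2\times 2$ matrix $R$ and a driving function $f$, a solution of the Skorokhod problem is a pair $(g,m)$ where (1) $g:[0,\infty)\to D$ is continuous; (2) $m=(m_1,m_2):[0,\infty)\to\mathbb{R}^2$ is continuous with $m(0)=0$ and each $m_j$ non-decreasing; (3) $g(t)=f(t)+Rm(t)$ for all $t\ge 0$; and (4) for $j=1,2$, $m_j$ increases only when $g_j=0$, i.e. $\int_0^\infty g_j(t)\,dm_j(t)=0$. "Unique solution" means there is exactly one such pair $(g,m)$. *)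

theory Defs
  imports "HOL-Analysis.Analysis"
begin

definition nonneg2 :: "real \<times> real \<Rightarrow> bool" where
  "nonneg2 b \<longleftrightarrow> fst b \<ge> 0 \<and> snd b \<ge> 0"

definition mat_app2 :: "real \<Rightarrow> real \<Rightarrow> real \<Rightarrow> real \<Rightarrow> real \<times> real \<Rightarrow> real \<times> real" where
  "mat_app2 r11 r12 r21 r22 b = (r11 * fst b + r12 * snd b, r21 * fst b + r22 * snd b)"

definition driving_function :: "(real \<Rightarrow> real \<times> real) \<Rightarrow> bool" where
  "driving_function f \<longleftrightarrow> continuous_on {0..} f \<and> nonneg2 (f 0)"

text \<open>Lebesgue--Stieltjes integral over [0,\<infinity>) of a nonnegative function h against a
  nondecreasing continuous function F defined on [0,\<infinity>) (extended constantly to the left).\<close>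
definition stieltjes_nn :: "(real \<Rightarrow> real) \<Rightarrow> (real \<Rightarrow> real) \<Rightarrow> ennreal" where
  "stieltjes_nn h F = (\<integral>\<^sup>+ t. ennreal (h t) * indicator {0..} t \<partial>interval_measure (\<lambda>t. F (max 0 t)))"

definition skorokhod_solution ::
  "real \<Rightarrow> real \<Rightarrow> real \<Rightarrow> real \<Rightarrow> (real \<Rightarrow> real \<times> real) \<Rightarrow>
   (real \<Rightarrow> real \<times> real) \<Rightarrow> (real \<Rightarrow> real \<times> real) \<Rightarrow> bool" where
  "skorokhod_solution r11 r12 r21 r22 f g m \<longleftrightarrow>
     continuous_on {0..} g \<and> (\<forall>t\<ge>0. nonneg2 (g t)) \<and>
     continuous_on {0..} m \<and> m 0 = (0, 0) \<and>
     mono_on {0..} (\<lambda>t. fst (m t)) \<and> mono_on {0..} (\<lambda>t. snd (m t)) \<and>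
     (\<forall>t\<ge>0. g t = f t + mat_app2 r11 r12 r21 r22 (m t)) \<and>
     stieltjes_nn (\<lambda>t. fst (g t)) (\<lambda>t. fst (m t)) = 0 \<and>
     stieltjes_nn (\<lambda>t. snd (g t)) (\<lambda>t. snd (m t)) = 0"

text \<open>Functions are only relevant on [0,\<infinity>); uniqueness is up to agreement on [0,\<infinity>).\<close>
definition unique_skorokhod_solution ::
  "real \<Rightarrow> real \<Rightarrow> real \<Rightarrow> real \<Rightarrow> (real \<Rightarrow> real \<times> real) \<Rightarrow> bool" where
  "unique_skorokhod_solution r11 r12 r21 r22 f \<longleftrightarrow>
     (\<exists>g m. skorokhod_solution r11 r12 r21 r22 f g m) \<and>
     (\<forall>g m g' m'. skorokhod_solution r11 r12 r21 r22 f g m \<and>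
        skorokhod_solution r11 r12 r21 r22 f g' m' \<longrightarrow>
        (\<forall>t\<ge>0. g t = g' t \<and> m t = m' t))"

end

theory Submission
  imports Defs
begin

definition psi :: "(real \<Rightarrow> real) \<Rightarrow> real \<Rightarrow> real" where
  "psi h t = Sup ((\<lambda>s. max 0 (- h s)) ` {0..t})"

lemma psi_ge:
  assumes "bdd_below (h ` {0..t})" "s \<in> {0..t}"
  shows "max 0 (- h s) \<le> psi h t"
proof -
  obtain L where L0: "\<forall>s\<in>{0..t}. L \<le> h s" using assms(1) unfolding bdd_below_def by auto
  then have L: "\<And>s. s \<in> {0..t} \<Longrightarrow> L \<le> h s" by auto
  have B: "bdd_above ((\<lambda>s. max 0 (- h s)) ` {0..t})"
    by (rule bdd_aboveI[where M="max 0 (-L)"]) (use L in force)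
  show ?thesis unfolding psi_def by (rule cSup_upper) (use assms(2) B in auto)
qed

lemma psi_le:
  assumes "0 \<le> t" "\<And>s. s \<in> {0..t} \<Longrightarrow> max 0 (- h s) \<le> M"
  shows "psi h t \<le> M"
  unfolding psi_def by (rule cSup_least) (use assms in auto)

lemma psi_nonneg: "bdd_below (h ` {0..t}) \<Longrightarrow> 0 \<le> t \<Longrightarrow> 0 \<le> psi h t"
  using psi_ge[of h t 0] by auto

lemma psi_ge': "bdd_below (h ` {0..t}) \<Longrightarrow> 0 \<le> t \<Longrightarrow> - h t \<le> psi h t"
  using psi_ge[of h t t] by auto

lemma psi_zero: "h 0 \<ge> 0 \<Longrightarrow> psi h 0 = 0"
  unfolding psi_def by simp

lemma psi_mono_t:
  assumes "bdd_below (h ` {0..t})" "0 \<le> s" "s \<le> t"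
  shows "psi h s \<le> psi h t"
proof (rule psi_le)
  fix r assume "r \<in> {0..s}"
  then show "max 0 (- h r) \<le> psi h t" using psi_ge[OF assms(1), of r] assms by auto
qed (use assms in auto)

lemma psi_anti:
  assumes "bdd_below (h ` {0..t})" "0 \<le> t" "\<And>s. s \<in> {0..t} \<Longrightarrow> h s \<le> h' s"
  shows "psi h' t \<le> psi h t"
proof (rule psi_le[OF assms(2)])
  fix s assume s: "s \<in> {0..t}"
  have "max 0 (- h' s) \<le> max 0 (- h s)" using assms(3)[OF s] by auto
  also have "\<dots> \<le> psi h t" by (rule psi_ge[OF assms(1) s])
  finally show "max 0 (- h' s) \<le> psi h t" .
qed

lemma cont_bdd: fixes h :: "real \<Rightarrow> real" and t :: real
  shows "continuous_on {0..} h \<Longrightarrow> bdd_below (h ` {0..t})"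
proof -
  assume c: "continuous_on {0..} h"
  have "continuous_on {0..t} h" by (rule continuous_on_subset[OF c]) auto
  then have "compact (h ` {0..t})" by (rule compact_continuous_image[OF _ compact_Icc])
  then show ?thesis by (intro bounded_imp_bdd_below compact_imp_bounded)
qed

lemma psi_step:
  assumes "0 \<le> s" "s \<le> t" "e \<ge> 0" "mono_on {0..} w" "\<And>r. r \<ge> 0 \<Longrightarrow> h r = fc r + w r"
    "\<And>r. r \<in> {s..t} \<Longrightarrow> fc r \<ge> fc s - e" "bdd_below (h ` {0..s})"
  shows "psi h t \<le> psi h s + e"
proof (rule psi_le)
  show "0 \<le> t" using assms by auto
  fix r assume r: "r \<in> {0..t}"
  have ps: "0 \<le> psi h s" "- h s \<le> psi h s" using psi_nonneg[OF assms(7) assms(1)] psi_ge'[OF assms(7) assms(1)] by auto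
  show "max 0 (- h r) \<le> psi h s + e"
  proof (cases "r \<le> s")
    case True
    then show ?thesis using psi_ge[OF assms(7), of r] r assms(3) by auto
  next
    case False
    then have "w s \<le> w r" using assms(4) assms(1) r by (auto simp: mono_on_def)
    moreover have "fc r \<ge> fc s - e" using assms(6) False r by auto
    ultimately have "- h r \<le> - h s + e" using assms(5) r assms(1) by auto
    then show ?thesis using ps assms(3) by auto
  qed
qed

lemma psi_cont:
  assumes "continuous_on {0..} fc" "mono_on {0..} w" "\<And>r. r \<ge> 0 \<Longrightarrow> h r = fc r + w r"
  shows "continuous_on {0..} (psi h)"
proof -
  have bdd: "bdd_below (h ` {0..t})" for t
  proof -
    obtain L where L: "\<forall>s\<in>{0..t}. L \<le> fc s" using cont_bdd[OF assms(1), of t]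
      unfolding bdd_below_def by auto
    show ?thesis
    proof (rule bdd_belowI[where m="L + w 0"])
      fix x assume "x \<in> h ` {0..t}"
      then obtain s where s: "s \<in> {0..t}" "x = h s" by auto
      have "w 0 \<le> w s" using assms(2) s by (auto simp: mono_on_def)
      then show "L + w 0 \<le> x" using bspec[OF L s(1)] s assms(3)[of s] by auto
    qed
  qed
  show ?thesis
    unfolding continuous_on_iff
  proof (intro ballI allI impI)
    fix t0 e :: real assume t0: "t0 \<in> {0..}" and e: "0 < e"
    have e3: "e/3 > 0" using e by simp
    obtain d where d0: "d > 0" "\<forall>r\<in>{0..}. dist r t0 < d \<longrightarrow> dist (fc r) (fc t0) < e/3"
      using assms(1) t0 e3 unfolding continuous_on_iff by blast
    have d: "d > 0" "\<And>r. r \<in> {0..} \<Longrightarrow> dist r t0 < d \<Longrightarrow> dist (fc r) (fc t0) < e/3"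
      using d0 by auto
    show "\<exists>d>0. \<forall>x'\<in>{0..}. dist x' t0 < d \<longrightarrow> dist (psi h x') (psi h t0) < e"
    proof (intro exI[of _ d] conjI ballI impI)
      fix t assume t: "t \<in> {0..}" "dist t t0 < d"
      show "dist (psi h t) (psi h t0) < e"
      proof (cases "t0 \<le> t")
        case True
        have "psi h t \<le> psi h t0 + e/3"
        proof (rule psi_step[OF _ True _ assms(2) assms(3) _ bdd])
          fix r assume r: "r \<in> {t0..t}"
          have "dist r t0 < d" using r t(2) unfolding dist_real_def by simp
          then have "dist (fc r) (fc t0) < e/3" using d(2)[of r] r t0 by simp
          then show "fc t0 - e/3 \<le> fc r" unfolding dist_real_def by arith
        next
          show "0 \<le> t0" using t0 by simp
        next
          show "0 \<le> e/3" using e by simp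
        qed
        moreover have "psi h t0 \<le> psi h t" by (rule psi_mono_t[OF bdd]) (use t0 True in simp_all)
        ultimately show ?thesis using e True unfolding dist_real_def by arith
      next
        case False
        have ft: "dist (fc t) (fc t0) < e/3" using d(2)[of t] t by simp
        have "psi h t0 \<le> psi h t + 2*e/3"
        proof (rule psi_step[OF _ _ _ assms(2) assms(3) _ bdd])
          fix r assume r: "r \<in> {t..t0}"
          have "dist r t0 < d" using r t(2) unfolding dist_real_def by simp
          then have "dist (fc r) (fc t0) < e/3" using d(2)[of r] r t by simp
          then show "fc t - 2*e/3 \<le> fc r" using ft unfolding dist_real_def by arith
        next
          show "0 \<le> t" using t by simp
        next
          show "t \<le> t0" using False by simp
        next
          show "0 \<le> 2*e/3" using e by simp
        qed
        moreover have "psi h t \<le> psi h t0" by (rule psi_mono_t[OF bdd]) (use t False in simp_all)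
        ultimately show ?thesis using e False unfolding dist_real_def by arith
      qed
    next
      show "d > 0" using d by simp
    qed
  qed
qed

lemma psi_flat:
  assumes "continuous_on {0..} h" "0 \<le> p" "p \<le> q" "\<And>r. r \<in> {p..q} \<Longrightarrow> h r + psi h r > 0"
  shows "psi h p = psi h q"
proof -
  have "continuous_on {p..q} (\<lambda>r. - h r)"
    by (intro continuous_intros continuous_on_subset[OF assms(1)]) (use assms in auto)
  then obtain r0 where r0: "r0 \<in> {p..q}" "\<And>r. r \<in> {p..q} \<Longrightarrow> - h r \<le> - h r0"
    using continuous_attains_sup[of "{p..q}" "\<lambda>r. - h r"] assms(3) by auto
  have bdd: "bdd_below (h ` {0..t})" for t using cont_bdd[OF assms(1)] .
  have pp: "0 \<le> psi h p" by (rule psi_nonneg[OF bdd assms(2)])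
  have A: "psi h q \<le> max (psi h p) (- h r0)"
  proof (rule psi_le)
    fix s assume s: "s \<in> {0..q}"
    show "max 0 (- h s) \<le> max (psi h p) (- h r0)"
    proof (cases "s \<le> p")
      case True 
      have "max 0 (- h s) \<le> psi h p" by (rule psi_ge[OF bdd]) (use True s in auto)
      then show ?thesis by (simp add: le_max_iff_disj)
    next
      case False
      then have "- h s \<le> - h r0" using r0(2)[of s] s by auto
      then show ?thesis using pp by (auto simp: max_def)
    qed
  qed (use assms in auto)
  have B: "psi h r0 \<le> psi h q" by (rule psi_mono_t[OF bdd]) (use r0 assms in auto)
  have C: "psi h p \<le> psi h q" by (rule psi_mono_t[OF bdd]) (use assms in auto)
  have D: "h r0 + psi h r0 > 0" using assms(4) r0 by auto
  show ?thesis
  proof (rule ccontr)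
    assume "psi h p \<noteq> psi h q"
    then have "psi h p < psi h q" using C by simp
    then have "psi h q \<le> - h r0" using A by (auto simp: le_max_iff_disj)
    then show False using B D by simp
  qed
qed

lemma barrier:
  fixes \<phi> :: "real \<Rightarrow> real"
  assumes cont: "continuous_on {s..t} \<phi>" and start: "\<phi> s \<le> c"
    and dec: "\<And>p q. s \<le> p \<Longrightarrow> p \<le> q \<Longrightarrow> q \<le> t \<Longrightarrow> (\<And>z. z \<in> {p..q} \<Longrightarrow> \<phi> z > c) \<Longrightarrow> \<phi> q \<le> \<phi> p"
    and x: "x \<in> {s..t}"
  shows "\<phi> x \<le> c"
proof (rule ccontr)
  assume "\<not> \<phi> x \<le> c"
  then have xc: "\<phi> x > c" by simp
  define A where "A = {y \<in> {s..x}. \<phi> y \<le> (\<lambda>_. c) y}"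
  have cx: "continuous_on {s..x} \<phi>" by (rule continuous_on_subset[OF cont]) (use x in auto)
  have clA: "closed A" unfolding A_def
    by (rule continuous_on_closed_Collect_le[OF cx continuous_on_const closed_atLeastAtMost])
  have sA: "s \<in> A" using x start by (auto simp: A_def)
  have bA: "bdd_above A" by (rule bdd_aboveI[where M=x]) (auto simp: A_def)
  define \<sigma> where "\<sigma> = Sup A"
  have \<sigma>A: "\<sigma> \<in> A" unfolding \<sigma>_def by (rule closed_contains_Sup) (use sA bA clA in auto)
  then have \<sigma>1: "s \<le> \<sigma>" "\<sigma> \<le> x" "\<phi> \<sigma> \<le> c" by (auto simp: A_def)
  have \<sigma>x: "\<sigma> < x" using \<sigma>1 xc by (cases "\<sigma> = x") auto
  have gt: "\<phi> y > c" if "\<sigma> < y" "y \<le> x" for y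
  proof (rule ccontr)
    assume "\<not> \<phi> y > c"
    then have "y \<in> A" using that \<sigma>1 by (auto simp: A_def)
    then have "y \<le> \<sigma>" unfolding \<sigma>_def by (rule cSup_upper[OF _ bA])
    then show False using that by simp
  qed
  have "\<sigma> \<in> {s..t}" using \<sigma>1 x by auto
  then obtain d where d: "d > 0" "\<forall>y\<in>{s..t}. dist y \<sigma> < d \<longrightarrow> dist (\<phi> y) (\<phi> \<sigma>) < \<phi> x - c"
    using cont xc unfolding continuous_on_iff by (meson diff_gt_0_iff_gt)
  define p where "p = min x (\<sigma> + d/2)"
  have p: "\<sigma> < p" "p \<le> x" "dist p \<sigma> < d" using \<sigma>x d(1) by (auto simp: p_def dist_real_def)
  have "\<phi> x \<le> \<phi> p"
  proof (rule dec)
    show "s \<le> p" using p \<sigma>1 by simp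
    show "p \<le> x" using p by simp
    show "x \<le> t" using x by simp
    fix z assume "z \<in> {p..x}"
    then show "\<phi> z > c" using gt p by auto
  qed
  moreover have "dist (\<phi> p) (\<phi> \<sigma>) < \<phi> x - c" using d(2) p \<sigma>1 x by auto
  ultimately show False using \<sigma>1 unfolding dist_real_def by arith
qed

lemma Fmax_props:
  fixes F :: "real \<Rightarrow> real"
  assumes cF: "continuous_on {0..} F" and mF: "mono_on {0..} F"
  shows "\<And>x y. x \<le> y \<Longrightarrow> F (max 0 x) \<le> F (max 0 y)"
    and "continuous_on UNIV (\<lambda>t. F (max 0 t))"
proof -
  fix x y :: real assume "x \<le> y"
  then show "F (max 0 x) \<le> F (max 0 y)" using mF by (auto simp: mono_on_def)
next
  show "continuous_on UNIV (\<lambda>t. F (max 0 t))"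
    by (rule continuous_on_compose2[OF cF]) (auto intro!: continuous_intros)
qed

lemma emeasure_Fmax_Icc:
  fixes F :: "real \<Rightarrow> real"
  assumes cF: "continuous_on {0..} F" and mF: "mono_on {0..} F" and "a \<le> b"
  shows "emeasure (interval_measure (\<lambda>t. F (max 0 t))) {a..b} = ennreal (F (max 0 b) - F (max 0 a))"
  by (rule emeasure_interval_measure_Icc[OF assms(3) Fmax_props(1)[OF cF mF] Fmax_props(2)[OF cF mF]])

lemma stieltjes_imp_flat:
  fixes F h :: "real \<Rightarrow> real"
  assumes cF: "continuous_on {0..} F" and mF: "mono_on {0..} F" and ch: "continuous_on {0..} h"
    and st: "stieltjes_nn h F = 0" and pq: "0 \<le> p" "p \<le> q" and pos: "\<And>r. r \<in> {p..q} \<Longrightarrow> h r > 0"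
  shows "F p = F q"
proof -
  let ?M = "interval_measure (\<lambda>t. F (max 0 t))"
  have "continuous_on {p..q} h" by (rule continuous_on_subset[OF ch]) (use pq in auto)
  then obtain r0 where r0: "r0 \<in> {p..q}" "\<And>r. r \<in> {p..q} \<Longrightarrow> h r0 \<le> h r"
    using continuous_attains_inf[of "{p..q}" h] pq by auto
  have eta: "h r0 > 0" using pos r0 by auto
  have "(\<integral>\<^sup>+ t. ennreal (h r0) * indicator {p..q} t \<partial>?M) \<le> (\<integral>\<^sup>+ t. ennreal (h t) * indicator {0..} t \<partial>?M)"
  proof (rule nn_integral_mono)
    fix t
    show "ennreal (h r0) * indicator {p..q} t \<le> ennreal (h t) * indicator {0..} t"
    proof (cases "t \<in> {p..q}")
      case True
      then have "h r0 \<le> h t" "t \<in> {0..}" using r0 pq by auto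
      then show ?thesis using True by (simp add: ennreal_leI)
    qed simp
  qed
  also have "\<dots> = 0" using st by (simp add: stieltjes_nn_def)
  finally have "ennreal (h r0) * emeasure ?M {p..q} \<le> 0"
    by (simp add: nn_integral_cmult_indicator)
  then have "ennreal (h r0) * ennreal (F q - F p) = 0"
    using emeasure_Fmax_Icc[OF cF mF pq(2)] pq by simp
  then have "F q - F p \<le> 0" using eta by (simp add: ennreal_eq_0_iff)
  moreover have "F p \<le> F q" using mF pq by (auto simp: mono_on_def)
  ultimately show ?thesis by simp
qed

lemma flat_imp_stieltjes:
  fixes F h :: "real \<Rightarrow> real"
  assumes cF: "continuous_on {0..} F" and mF: "mono_on {0..} F" and ch: "continuous_on {0..} h"
    and flat: "\<And>p q. 0 \<le> p \<Longrightarrow> p \<le> q \<Longrightarrow> (\<And>r. r \<in> {p..q} \<Longrightarrow> h r > 0) \<Longrightarrow> F p = F q"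
  shows "stieltjes_nn h F = 0"
proof -
  let ?M = "interval_measure (\<lambda>t. F (max 0 t))"
  define Q where "Q = {(p, q). p \<in> \<rat> \<and> q \<in> \<rat> \<and> 0 \<le> p \<and> p \<le> q \<and> (\<forall>r\<in>{p..q}. h r > 0)}"
  define N where "N = (\<Union>pq\<in>Q. {fst pq..snd pq})"
  have cQ: "countable Q"
    by (rule countable_subset[of _ "\<rat> \<times> \<rat>"]) (auto simp: Q_def countable_rat)
  have "N \<in> null_sets ?M" unfolding N_def
  proof (rule null_sets_UN'[OF cQ])
    fix pq assume "pq \<in> Q"
    then obtain p q where pq: "pq = (p, q)" "0 \<le> p" "p \<le> q" "\<And>r. r \<in> {p..q} \<Longrightarrow> h r > 0"
      by (auto simp: Q_def)
    have "F p = F q" by (rule flat[OF pq(2,3,4)])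
    then have "emeasure ?M {p..q} = 0" using emeasure_Fmax_Icc[OF cF mF pq(3)] pq by simp
    then show "{fst pq..snd pq} \<in> null_sets ?M" using pq by (simp add: null_sets_def)
  qed
  then have ae: "AE t in ?M. ennreal (h t) * indicator {0..} t = 0"
  proof (rule AE_I')
    show "{x \<in> space ?M. \<not> ennreal (h x) * indicator {0..} x = 0} \<subseteq> N"
    proof
      fix t assume "t \<in> {x \<in> space ?M. \<not> ennreal (h x) * indicator {0..} x = 0}"
      then have t: "t \<ge> 0" "h t > 0" by (auto simp: indicator_def ennreal_eq_0_iff split: if_splits)
      obtain d where d: "d > 0" "\<forall>r\<in>{0..}. dist r t < d \<longrightarrow> dist (h r) (h t) < h t"
        using ch t unfolding continuous_on_iff by (meson atLeast_iff)
      obtain q where q: "q \<in> \<rat>" "t < q" "q < t + d" using Rats_dense_in_real[of t "t + d"] d by auto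
      obtain p where p: "p \<in> \<rat>" "t - d < p" "p \<le> t" "0 \<le> p"
      proof (cases "t = 0")
        case True then show ?thesis using that[of 0] d(1) by auto
      next
        case False
        then obtain p where "p \<in> \<rat>" "max 0 (t - d) < p" "p < t"
          using Rats_dense_in_real[of "max 0 (t - d)" t] d t by auto
        then show ?thesis using that[of p] by auto
      qed
      have hpos: "\<forall>r\<in>{p..q}. h r > 0"
      proof
        fix r assume r: "r \<in> {p..q}"
        have "r \<ge> 0" using r p by simp
        moreover have "dist r t < d" using r p q t d(1) unfolding dist_real_def by auto
        ultimately have "dist (h r) (h t) < h t" using d(2) by auto
        then show "0 < h r" unfolding dist_real_def by arith
      qed
      have "(p, q) \<in> Q" unfolding Q_def using p q hpos by auto
      moreover have "t \<in> {p..q}" using p q by auto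
      ultimately show "t \<in> N" unfolding N_def by force
    qed
  qed
  have "stieltjes_nn h F = (\<integral>\<^sup>+ t. 0 \<partial>?M)"
    unfolding stieltjes_nn_def by (rule nn_integral_cong_AE[OF ae])
  then show ?thesis by simp
qed

lemma sol_facts:
  assumes S: "skorokhod_solution 1 a1 a2 1 f g m"
  shows "continuous_on {0..} (\<lambda>t. fst (m t))" "continuous_on {0..} (\<lambda>t. snd (m t))"
    "mono_on {0..} (\<lambda>t. fst (m t))" "mono_on {0..} (\<lambda>t. snd (m t))"
    "\<And>t. t \<ge> 0 \<Longrightarrow> fst (g t) \<ge> 0" "\<And>t. t \<ge> 0 \<Longrightarrow> snd (g t) \<ge> 0"
    "\<And>t. t \<ge> 0 \<Longrightarrow> fst (g t) = fst (f t) + fst (m t) + a1 * snd (m t)"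
    "\<And>t. t \<ge> 0 \<Longrightarrow> snd (g t) = snd (f t) + a2 * fst (m t) + snd (m t)"
    "m 0 = (0, 0)"
    "\<And>p q. 0 \<le> p \<Longrightarrow> p \<le> q \<Longrightarrow> (\<And>r. r \<in> {p..q} \<Longrightarrow> fst (g r) > 0) \<Longrightarrow> fst (m p) = fst (m q)"
    "\<And>p q. 0 \<le> p \<Longrightarrow> p \<le> q \<Longrightarrow> (\<And>r. r \<in> {p..q} \<Longrightarrow> snd (g r) > 0) \<Longrightarrow> snd (m p) = snd (m q)"
proof -
  have cg: "continuous_on {0..} g" and cm: "continuous_on {0..} m"
    and nn: "\<forall>t\<ge>0. nonneg2 (g t)" and m0: "m 0 = (0, 0)"
    and mo1: "mono_on {0..} (\<lambda>t. fst (m t))" and mo2: "mono_on {0..} (\<lambda>t. snd (m t))"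
    and eq: "\<forall>t\<ge>0. g t = f t + mat_app2 1 a1 a2 1 (m t)"
    and st1: "stieltjes_nn (\<lambda>t. fst (g t)) (\<lambda>t. fst (m t)) = 0"
    and st2: "stieltjes_nn (\<lambda>t. snd (g t)) (\<lambda>t. snd (m t)) = 0"
    using S unfolding skorokhod_solution_def by auto
  show c1: "continuous_on {0..} (\<lambda>t. fst (m t))" "continuous_on {0..} (\<lambda>t. snd (m t))"
    using cm by (auto intro: continuous_intros)
  have cg1: "continuous_on {0..} (\<lambda>t. fst (g t))" "continuous_on {0..} (\<lambda>t. snd (g t))"
    using cg by (auto intro: continuous_intros)
  show "mono_on {0..} (\<lambda>t. fst (m t))" "mono_on {0..} (\<lambda>t. snd (m t))" by fact+
  show "\<And>t. t \<ge> 0 \<Longrightarrow> fst (g t) \<ge> 0" "\<And>t. t \<ge> 0 \<Longrightarrow> snd (g t) \<ge> 0"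
    using nn by (auto simp: nonneg2_def)
  show "\<And>t. t \<ge> 0 \<Longrightarrow> fst (g t) = fst (f t) + fst (m t) + a1 * snd (m t)"
       "\<And>t. t \<ge> 0 \<Longrightarrow> snd (g t) = snd (f t) + a2 * fst (m t) + snd (m t)"
    using eq by (auto simp: mat_app2_def)
  show "m 0 = (0, 0)" by fact
  show "\<And>p q. 0 \<le> p \<Longrightarrow> p \<le> q \<Longrightarrow> (\<And>r. r \<in> {p..q} \<Longrightarrow> fst (g r) > 0) \<Longrightarrow> fst (m p) = fst (m q)"
    by (rule stieltjes_imp_flat[OF c1(1) mo1 cg1(1) st1]) auto
  show "\<And>p q. 0 \<le> p \<Longrightarrow> p \<le> q \<Longrightarrow> (\<And>r. r \<in> {p..q} \<Longrightarrow> snd (g r) > 0) \<Longrightarrow> snd (m p) = snd (m q)"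
    by (rule stieltjes_imp_flat[OF c1(2) mo2 cg1(2) st2]) auto
qed

lemma uniqueness:
  fixes a1 a2 :: real
  assumes a: "a1 * a2 = -1" "a2 > 0" "a1 < 0"
    and S: "skorokhod_solution 1 a1 a2 1 f g m" and S': "skorokhod_solution 1 a1 a2 1 f g' m'"
  shows "\<forall>t\<ge>0. g t = g' t \<and> m t = m' t"
proof -
  note F = sol_facts[OF S] and F' = sol_facts[OF S']
  define u where "u t = fst (m t) - fst (m' t)" for t
  define v where "v t = - a1 * (snd (m t) - snd (m' t))" for t
  have cu: "continuous_on {0..} u" unfolding u_def by (rule continuous_on_diff[OF F(1) F'(1)])
  have cv: "continuous_on {0..} v" unfolding v_def by (rule continuous_on_mult_left[OF continuous_on_diff[OF F(2) F'(2)]])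
  have d1: "fst (g t) - fst (g' t) = u t - v t" if "t \<ge> 0" for t
    using F(7)[OF that] F'(7)[OF that] by (simp add: u_def v_def algebra_simps)
  have d2: "snd (g t) - snd (g' t) = a2 * (u t + v t)" if "t \<ge> 0" for t
  proof -
    have "a2 * v t = - (a1 * a2) * (snd (m t) - snd (m' t))" unfolding v_def
      by (simp add: algebra_simps)
    then have "a2 * v t = snd (m t) - snd (m' t)" using a(1) by simp
    then show ?thesis using F(8)[OF that] F'(8)[OF that] by (simp add: u_def algebra_simps)
  qed
  have U1: "u q \<le> u p" if pq: "0 \<le> p" "p \<le> q" and pos: "\<And>r. r \<in> {p..q} \<Longrightarrow> u r - v r > 0" for p q
  proof -
    have "fst (m p) = fst (m q)"
    proof (rule F(10)[OF pq])
      fix r assume r: "r \<in> {p..q}"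
      then show "fst (g r) > 0" using pos[OF r] d1[of r] F'(5)[of r] pq by auto
    qed
    moreover have "fst (m' p) \<le> fst (m' q)" using F'(3) pq by (auto simp: mono_on_def)
    ultimately show ?thesis by (simp add: u_def)
  qed
  have U2: "u p \<le> u q" if pq: "0 \<le> p" "p \<le> q" and pos: "\<And>r. r \<in> {p..q} \<Longrightarrow> u r - v r < 0" for p q
  proof -
    have "fst (m' p) = fst (m' q)"
    proof (rule F'(10)[OF pq])
      fix r assume r: "r \<in> {p..q}"
      then show "fst (g' r) > 0" using pos[OF r] d1[of r] F(5)[of r] pq by auto
    qed
    moreover have "fst (m p) \<le> fst (m q)" using F(3) pq by (auto simp: mono_on_def)
    ultimately show ?thesis by (simp add: u_def)
  qed
  have V1: "v q \<le> v p" if pq: "0 \<le> p" "p \<le> q" and pos: "\<And>r. r \<in> {p..q} \<Longrightarrow> u r + v r > 0" for p q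
  proof -
    have "snd (m p) = snd (m q)"
    proof (rule F(11)[OF pq])
      fix r assume r: "r \<in> {p..q}"
      have "a2 * (u r + v r) > 0" using pos[OF r] a(2) by simp
      then show "snd (g r) > 0" using d2[of r] F'(6)[of r] pq r by auto
    qed
    moreover have "snd (m' p) \<le> snd (m' q)" using F'(4) pq by (auto simp: mono_on_def)
    ultimately show ?thesis using a(3) unfolding v_def by (simp add: algebra_simps mult_left_mono_neg)
  qed
  have V2: "v p \<le> v q" if pq: "0 \<le> p" "p \<le> q" and pos: "\<And>r. r \<in> {p..q} \<Longrightarrow> u r + v r < 0" for p q
  proof -
    have "snd (m' p) = snd (m' q)"
    proof (rule F'(11)[OF pq])
      fix r assume r: "r \<in> {p..q}"
      have "a2 * (u r + v r) < 0" using pos[OF r] a(2) by (simp add: mult_pos_neg)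
      then show "snd (g' r) > 0" using d2[of r] F(6)[of r] pq r by auto
    qed
    moreover have "snd (m p) \<le> snd (m q)" using F(4) pq by (auto simp: mono_on_def)
    ultimately show ?thesis using a(3) unfolding v_def by (simp add: algebra_simps mult_left_mono_neg)
  qed
  have u0: "u 0 = 0" and v0: "v 0 = 0" using F(9) F'(9) by (auto simp: u_def v_def)
  define N where "N t = max \<bar>u t\<bar> \<bar>v t\<bar>" for t
  have cN: "continuous_on {0..} N" unfolding N_def using cu cv by (intro continuous_intros)
  have N0: "\<forall>t\<ge>0. N t = 0"
  proof (rule ccontr)
    assume "\<not> (\<forall>t\<ge>0. N t = 0)"
    then obtain t where t: "t \<ge> 0" "N t \<noteq> 0" by auto
    then have Nt: "N t > 0" by (auto simp: N_def)
    define c where "c = N t / 2"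
    have c: "c > 0" "c < N t" using Nt by (auto simp: c_def)
    define A where "A = {y \<in> {0..t}. N y \<le> (\<lambda>_. c) y}"
    have cNt: "continuous_on {0..t} N" by (rule continuous_on_subset[OF cN]) auto
    have clA: "closed A" unfolding A_def
      by (rule continuous_on_closed_Collect_le[OF cNt continuous_on_const closed_atLeastAtMost])
    have sA: "0 \<in> A" using t c u0 v0 by (auto simp: A_def N_def)
    have bA: "bdd_above A" by (rule bdd_aboveI[where M=t]) (auto simp: A_def)
    define \<tau> where "\<tau> = Sup A"
    have \<tau>A: "\<tau> \<in> A" unfolding \<tau>_def by (rule closed_contains_Sup) (use sA bA clA in auto)
    then have \<tau>1: "0 \<le> \<tau>" "\<tau> \<le> t" "N \<tau> \<le> c" by (auto simp: A_def)
    have \<tau>t: "\<tau> < t" using \<tau>1 c by (cases "\<tau> = t") auto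
    have gt: "N y > c" if "\<tau> < y" "y \<le> t" for y
    proof (rule ccontr)
      assume "\<not> N y > c"
      then have "y \<in> A" using that \<tau>1 by (auto simp: A_def)
      then have "y \<le> \<tau>" unfolding \<tau>_def by (rule cSup_upper[OF _ bA])
      then show False using that by simp
    qed
    have bnd\<tau>: "\<bar>u \<tau>\<bar> \<le> c" "\<bar>v \<tau>\<bar> \<le> c" using \<tau>1 by (auto simp: N_def)
    have "\<exists>r. \<tau> < r \<and> r \<le> t \<and> ((\<forall>x\<in>{\<tau>..r}. u x \<le> c) \<or> (\<forall>x\<in>{\<tau>..r}. - u x \<le> c))"
    proof (cases "u \<tau> < c")
      case True
      then have "0 < c - u \<tau>" by simp
      obtain d where d: "d > 0" "\<forall>y\<in>{0..}. dist y \<tau> < d \<longrightarrow> dist (u y) (u \<tau>) < c - u \<tau>"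
        using cu \<tau>1 \<open>0 < c - u \<tau>\<close> unfolding continuous_on_iff by (meson atLeast_iff)
      define r where "r = min t (\<tau> + d/2)"
      have "\<forall>x\<in>{\<tau>..r}. u x \<le> c"
      proof
        fix x assume x: "x \<in> {\<tau>..r}"
        then have "dist x \<tau> < d" using d(1) by (auto simp: r_def dist_real_def)
        then have "dist (u x) (u \<tau>) < c - u \<tau>" using d(2) x \<tau>1 by auto
        then show "u x \<le> c" unfolding dist_real_def by arith
      qed
      then show ?thesis using \<tau>t d(1) by (intro exI[of _ r]) (auto simp: r_def)
    next
      case False
      then have F2: "0 < c + u \<tau>" using c by simp
      obtain d where d: "d > 0" "\<forall>y\<in>{0..}. dist y \<tau> < d \<longrightarrow> dist (u y) (u \<tau>) < c + u \<tau>"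
        using cu \<tau>1 F2 unfolding continuous_on_iff by (meson atLeast_iff)
      define r where "r = min t (\<tau> + d/2)"
      have "\<forall>x\<in>{\<tau>..r}. - u x \<le> c"
      proof
        fix x assume x: "x \<in> {\<tau>..r}"
        then have "dist x \<tau> < d" using d(1) by (auto simp: r_def dist_real_def)
        then have "dist (u x) (u \<tau>) < c + u \<tau>" using d(2) x \<tau>1 by auto
        then show "- u x \<le> c" unfolding dist_real_def by arith
      qed
      then show ?thesis using \<tau>t d(1) by (intro exI[of _ r]) (auto simp: r_def)
    qed
    then obtain r where r: "\<tau> < r" "r \<le> t" and rc: "(\<forall>x\<in>{\<tau>..r}. u x \<le> c) \<or> (\<forall>x\<in>{\<tau>..r}. - u x \<le> c)"
      by blast
    have cu': "continuous_on {\<tau>..r} u" by (rule continuous_on_subset[OF cu]) (use \<tau>1 in auto)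
    have cv': "continuous_on {\<tau>..r} v" by (rule continuous_on_subset[OF cv]) (use \<tau>1 in auto)
    have cmu: "continuous_on {\<tau>..r} (\<lambda>x. - u x)" using cu' by (intro continuous_intros)
    have cmv: "continuous_on {\<tau>..r} (\<lambda>x. - v x)" using cv' by (intro continuous_intros)
    have I1: "\<forall>x\<in>{\<tau>..r}. - v x \<le> c" if H: "\<forall>x\<in>{\<tau>..r}. u x \<le> c"
    proof
      fix x assume x: "x \<in> {\<tau>..r}"
      show "- v x \<le> c"
      proof (rule barrier[OF cmv _ _ x])
        show "- v \<tau> \<le> c" using bnd\<tau> by simp
        fix p q assume pq: "\<tau> \<le> p" "p \<le> q" "q \<le> r" and P: "\<And>z. z \<in> {p..q} \<Longrightarrow> - v z > c"
        have "v p \<le> v q"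
        proof (rule V2)
          show "0 \<le> p" "p \<le> q" using pq \<tau>1 by auto
          fix z assume z: "z \<in> {p..q}"
          have "u z \<le> c" using H z pq by auto
          then show "u z + v z < 0" using P[OF z] by simp
        qed
        then show "- v q \<le> - v p" by simp
      qed
    qed
    have I2: "\<forall>x\<in>{\<tau>..r}. - u x \<le> c" if H: "\<forall>x\<in>{\<tau>..r}. - v x \<le> c"
    proof
      fix x assume x: "x \<in> {\<tau>..r}"
      show "- u x \<le> c"
      proof (rule barrier[OF cmu _ _ x])
        show "- u \<tau> \<le> c" using bnd\<tau> by simp
        fix p q assume pq: "\<tau> \<le> p" "p \<le> q" "q \<le> r" and P: "\<And>z. z \<in> {p..q} \<Longrightarrow> - u z > c"
        have "u p \<le> u q"
        proof (rule U2)
          show "0 \<le> p" "p \<le> q" using pq \<tau>1 by auto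
          fix z assume z: "z \<in> {p..q}"
          have "- v z \<le> c" using H z pq by auto
          then show "u z - v z < 0" using P[OF z] by simp
        qed
        then show "- u q \<le> - u p" by simp
      qed
    qed
    have I3: "\<forall>x\<in>{\<tau>..r}. v x \<le> c" if H: "\<forall>x\<in>{\<tau>..r}. - u x \<le> c"
    proof
      fix x assume x: "x \<in> {\<tau>..r}"
      show "v x \<le> c"
      proof (rule barrier[OF cv' _ _ x])
        show "v \<tau> \<le> c" using bnd\<tau> by simp
        fix p q assume pq: "\<tau> \<le> p" "p \<le> q" "q \<le> r" and P: "\<And>z. z \<in> {p..q} \<Longrightarrow> v z > c"
        show "v q \<le> v p"
        proof (rule V1)
          show "0 \<le> p" "p \<le> q" using pq \<tau>1 by auto
          fix z assume z: "z \<in> {p..q}"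
          have "- u z \<le> c" using H z pq by auto
          then show "u z + v z > 0" using P[OF z] by simp
        qed
      qed
    qed
    have I4: "\<forall>x\<in>{\<tau>..r}. u x \<le> c" if H: "\<forall>x\<in>{\<tau>..r}. v x \<le> c"
    proof
      fix x assume x: "x \<in> {\<tau>..r}"
      show "u x \<le> c"
      proof (rule barrier[OF cu' _ _ x])
        show "u \<tau> \<le> c" using bnd\<tau> by simp
        fix p q assume pq: "\<tau> \<le> p" "p \<le> q" "q \<le> r" and P: "\<And>z. z \<in> {p..q} \<Longrightarrow> u z > c"
        show "u q \<le> u p"
        proof (rule U1)
          show "0 \<le> p" "p \<le> q" using pq \<tau>1 by auto
          fix z assume z: "z \<in> {p..q}"
          have "v z \<le> c" using H z pq by auto
          then show "u z - v z > 0" using P[OF z] by simp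
        qed
      qed
    qed
    have all: "(\<forall>x\<in>{\<tau>..r}. u x \<le> c) \<and> (\<forall>x\<in>{\<tau>..r}. - u x \<le> c) \<and>
               (\<forall>x\<in>{\<tau>..r}. v x \<le> c) \<and> (\<forall>x\<in>{\<tau>..r}. - v x \<le> c)"
      using rc I1 I2 I3 I4 by blast
    have rr: "r \<in> {\<tau>..r}" using r by auto
    have "u r \<le> c" "- u r \<le> c" "v r \<le> c" "- v r \<le> c" using all rr by blast+
    then have "N r \<le> c" unfolding N_def by (simp add: abs_le_iff)
    moreover have "N r > c" using gt r by auto
    ultimately show False by simp
  qed
  have m_eq: "m t = m' t" if t: "t \<ge> 0" for t
  proof -
    have "u t = 0" "v t = 0" using N0 t by (auto simp: N_def)
    then have "fst (m t) = fst (m' t)" "snd (m t) = snd (m' t)" using a(3) by (auto simp: u_def v_def)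
    then show ?thesis by (simp add: prod_eq_iff)
  qed
  have "g t = g' t" if t: "t \<ge> 0" for t
    using F(7)[OF t] F'(7)[OF t] F(8)[OF t] F'(8)[OF t] m_eq[OF t] by (simp add: prod_eq_iff)
  then show ?thesis using m_eq by auto
qed

locale ex_setup =
  fixes a1 a2 :: real and f :: "real \<Rightarrow> real \<times> real"
  assumes a: "a1 * a2 = -1" "a2 > 0" "a1 < 0" and df: "driving_function f"
begin

definition f1 where "f1 t = fst (f t)"
definition f2 where "f2 t = snd (f t)"
definition Bd where "Bd = psi f2"
definition PhiM where "PhiM z = psi (\<lambda>t. f2 t + a2 * psi (\<lambda>s. f1 s + a1 * z s) t)"
definition inbox where "inbox z \<longleftrightarrow> (\<forall>t\<ge>0. 0 \<le> z t \<and> z t \<le> Bd t)"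
definition KK where "KK z = PhiM (PhiM z)"

lemma cf: "continuous_on {0..} f1" "continuous_on {0..} f2"
  using df unfolding driving_function_def f1_def f2_def by (auto intro: continuous_on_fst continuous_on_snd)

lemma f0: "f1 0 \<ge> 0" "f2 0 \<ge> 0"
  using df unfolding driving_function_def f1_def f2_def nonneg2_def by auto

lemma bdd2: "bdd_below (f2 ` {0..t})" by (rule cont_bdd[OF cf(2)])

lemma Bd_mono: "0 \<le> s \<Longrightarrow> s \<le> t \<Longrightarrow> Bd s \<le> Bd t"
  unfolding Bd_def by (rule psi_mono_t[OF bdd2])

lemma Bd_nonneg: "0 \<le> t \<Longrightarrow> 0 \<le> Bd t"
  unfolding Bd_def by (rule psi_nonneg[OF bdd2])

lemma bdd_inner:
  assumes "inbox z" shows "bdd_below ((\<lambda>s. f1 s + a1 * z s) ` {0..t})"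
proof -
  obtain L where L: "\<forall>s\<in>{0..t}. L \<le> f1 s" using cont_bdd[OF cf(1), of t] unfolding bdd_below_def by auto
  show ?thesis
  proof (rule bdd_belowI[where m="L + a1 * Bd t"])
    fix x assume "x \<in> (\<lambda>s. f1 s + a1 * z s) ` {0..t}"
    then obtain s where s: "s \<in> {0..t}" "x = f1 s + a1 * z s" by auto
    have "z s \<le> Bd s" using assms s unfolding inbox_def by auto
    also have "\<dots> \<le> Bd t" using Bd_mono s by auto
    finally have "a1 * Bd t \<le> a1 * z s" using a(3) by (simp add: mult_left_mono_neg)
    moreover have "L \<le> f1 s" using L s(1) by blast
    ultimately show "L + a1 * Bd t \<le> x" using s(2) by linarith
  qed
qed

lemma bdd_outer:
  assumes "\<And>t. t \<ge> 0 \<Longrightarrow> 0 \<le> x t" shows "bdd_below ((\<lambda>s. f2 s + a2 * x s) ` {0..t})"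
proof -
  obtain L where L: "\<forall>s\<in>{0..t}. L \<le> f2 s" using bdd2[of t] unfolding bdd_below_def by auto
  show ?thesis
  proof (rule bdd_belowI[where m="L"])
    fix y assume "y \<in> (\<lambda>s. f2 s + a2 * x s) ` {0..t}"
    then obtain s where s: "s \<in> {0..t}" "y = f2 s + a2 * x s" by auto
    have "0 \<le> a2 * x s" using assms[of s] s a(2) by simp
    moreover have "L \<le> f2 s" using L s(1) by blast
    ultimately show "L \<le> y" using s(2) by linarith
  qed
qed

lemma inner_nonneg: "inbox z \<Longrightarrow> 0 \<le> t \<Longrightarrow> 0 \<le> psi (\<lambda>s. f1 s + a1 * z s) t"
  by (rule psi_nonneg[OF bdd_inner])

lemma PhiM_box: assumes "inbox z" shows "inbox (PhiM z)"
  unfolding inbox_def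
proof (intro allI impI conjI)
  fix t :: real assume t: "0 \<le> t"
  let ?x = "psi (\<lambda>s. f1 s + a1 * z s)"
  have xn: "\<And>t. t \<ge> 0 \<Longrightarrow> 0 \<le> ?x t" using inner_nonneg[OF assms] by auto
  show "0 \<le> PhiM z t" unfolding PhiM_def by (rule psi_nonneg[OF bdd_outer[OF xn] t])
  show "PhiM z t \<le> Bd t" unfolding PhiM_def Bd_def
  proof (rule psi_anti[OF bdd2 t])
    fix s assume s: "s \<in> {0..t}"
    have "0 \<le> a2 * ?x s" using xn[of s] s a(2) by simp
    then show "f2 s \<le> f2 s + a2 * ?x s" by simp
  qed
qed

lemma PhiM_anti:
  assumes "inbox z" "inbox z'" "\<And>t. t \<ge> 0 \<Longrightarrow> z t \<le> z' t" "0 \<le> t"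
  shows "PhiM z' t \<le> PhiM z t"
proof -
  let ?x = "psi (\<lambda>s. f1 s + a1 * z s)" and ?x' = "psi (\<lambda>s. f1 s + a1 * z' s)"
  have xn: "\<And>t. t \<ge> 0 \<Longrightarrow> 0 \<le> ?x t" using inner_nonneg[OF assms(1)] by auto
  have xx: "?x s \<le> ?x' s" if s: "0 \<le> s" for s
  proof (rule psi_anti[OF bdd_inner[OF assms(2)] s])
    fix r assume r: "r \<in> {0..s}"
    have "a1 * z' r \<le> a1 * z r" using assms(3)[of r] r a(3) by (simp add: mult_left_mono_neg)
    then show "f1 r + a1 * z' r \<le> f1 r + a1 * z r" by simp
  qed
  show ?thesis unfolding PhiM_def
  proof (rule psi_anti[OF bdd_outer[OF xn] assms(4)])
    fix s assume s: "s \<in> {0..t}"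
    show "f2 s + a2 * ?x s \<le> f2 s + a2 * ?x' s" using xx[of s] s a(2) by (simp add: mult_left_mono)
  qed
qed

lemma KK_box: "inbox z \<Longrightarrow> inbox (KK z)"
  unfolding KK_def by (intro PhiM_box)

lemma KK_mono:
  assumes "inbox z" "inbox z'" "\<And>t. t \<ge> 0 \<Longrightarrow> z t \<le> z' t" "0 \<le> t"
  shows "KK z t \<le> KK z' t"
  unfolding KK_def
  by (rule PhiM_anti[OF PhiM_box[OF assms(2)] PhiM_box[OF assms(1)] PhiM_anti[OF assms(1,2,3)] assms(4)])

lemma tarski: "\<exists>ys. inbox ys \<and> (\<forall>t\<ge>0. KK ys t = ys t)"
proof -
  define P where "P = {z. inbox z \<and> (\<forall>t\<ge>0. z t \<le> KK z t)}"
  define ys where "ys t = Sup ((\<lambda>z. z t) ` P)" for t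
  have z0: "(\<lambda>_. 0) \<in> P"
  proof -
    have b0: "inbox (\<lambda>_. 0)" unfolding inbox_def using Bd_nonneg by auto
    have "\<forall>t\<ge>0. 0 \<le> KK (\<lambda>_. 0) t" using KK_box[OF b0] unfolding inbox_def by auto
    then show ?thesis using b0 by (auto simp: P_def)
  qed
  have bddP: "bdd_above ((\<lambda>z. z t) ` P)" if "t \<ge> 0" for t
    by (rule bdd_aboveI[where M="Bd t"]) (use that in \<open>auto simp: P_def inbox_def\<close>)
  have ysd: "ys t = Sup ((\<lambda>z. z t) ` P)" for t by (simp add: ys_def)
  have le_ys: "z t \<le> ys t" if "z \<in> P" "t \<ge> 0" for z t
    unfolding ysd[of t] by (rule cSup_upper) (use that bddP in auto)
  have box_ys: "inbox ys" unfolding inbox_def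
  proof (intro allI impI conjI)
    fix t :: real assume t: "0 \<le> t"
    show "0 \<le> ys t" using le_ys[OF z0 t] by simp
    show "ys t \<le> Bd t" unfolding ysd[of t]
      by (rule cSup_least) (use z0 t in \<open>auto simp: P_def inbox_def\<close>)
  qed
  have ys_le: "ys t \<le> KK ys t" if t: "t \<ge> 0" for t
    unfolding ysd[of t]
  proof (rule cSup_least)
    show "(\<lambda>z. z t) ` P \<noteq> {}" using z0 by auto
    fix x assume "x \<in> (\<lambda>z. z t) ` P"
    then obtain z where z: "z \<in> P" "x = z t" by auto
    have "z t \<le> KK z t" using z t by (auto simp: P_def)
    also have "\<dots> \<le> KK ys t"
      by (rule KK_mono) (use z box_ys le_ys t in \<open>auto simp: P_def\<close>)
    finally show "x \<le> KK ys t" using z by simp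
  qed
  have "KK ys \<in> P" unfolding P_def
  proof (intro CollectI conjI allI impI)
    show "inbox (KK ys)" by (rule KK_box[OF box_ys])
    fix t :: real assume t: "0 \<le> t"
    show "KK ys t \<le> KK (KK ys) t"
      by (rule KK_mono[OF box_ys KK_box[OF box_ys] _ t]) (use ys_le in auto)
  qed
  then have "KK ys t \<le> ys t" if "t \<ge> 0" for t using le_ys that by auto
  then have "\<forall>t\<ge>0. KK ys t = ys t" using ys_le by (auto intro: antisym)
  then show ?thesis using box_ys by blast
qed

lemma existence: "\<exists>g m. skorokhod_solution 1 a1 a2 1 f g m"
proof -
  obtain y1 where by1: "inbox y1" and fix1: "\<And>t. t \<ge> 0 \<Longrightarrow> KK y1 t = y1 t" using tarski by blast
  define hx1 where "hx1 s = f1 s + a1 * y1 s" for s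
  define x1 where "x1 = psi hx1"
  define hy2 where "hy2 s = f2 s + a2 * x1 s" for s
  define y2 where "y2 = psi hy2"
  define hx2 where "hx2 s = f1 s + a1 * y2 s" for s
  define x2 where "x2 = psi hx2"
  define hy1 where "hy1 s = f2 s + a2 * x2 s" for s
  have y2P: "y2 = PhiM y1" unfolding y2_def hy2_def x1_def hx1_def PhiM_def by simp
  have y1t: "y1 t = psi hy1 t" if "t \<ge> 0" for t
  proof -
    have "KK y1 t = psi hy1 t" unfolding KK_def y2P[symmetric]
      unfolding PhiM_def hy1_def x2_def hx2_def by simp
    then show ?thesis using fix1[OF that] by simp
  qed
  have by2: "inbox y2" unfolding y2P by (rule PhiM_box[OF by1])
  have bx1: "bdd_below (hx1 ` {0..t})" for t unfolding hx1_def by (rule bdd_inner[OF by1])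
  have bx2: "bdd_below (hx2 ` {0..t})" for t unfolding hx2_def by (rule bdd_inner[OF by2])
  have x1n: "0 \<le> x1 t" if "t \<ge> 0" for t unfolding x1_def by (rule psi_nonneg[OF bx1 that])
  have x2n: "0 \<le> x2 t" if "t \<ge> 0" for t unfolding x2_def by (rule psi_nonneg[OF bx2 that])
  have by2': "bdd_below (hy2 ` {0..t})" for t unfolding hy2_def by (rule bdd_outer[OF x1n])
  have by1': "bdd_below (hy1 ` {0..t})" for t unfolding hy1_def by (rule bdd_outer[OF x2n])
  have mx1: "mono_on {0..} x1" unfolding x1_def mono_on_def
    by (auto intro: psi_mono_t[OF bx1])
  have mx2: "mono_on {0..} x2" unfolding x2_def mono_on_def
    by (auto intro: psi_mono_t[OF bx2])
  have my2: "mono_on {0..} y2" unfolding y2_def mono_on_def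
    by (auto intro: psi_mono_t[OF by2'])
  have my1: "mono_on {0..} y1"
  proof (rule mono_onI)
    fix r s :: real assume "r \<in> {0..}" "s \<in> {0..}" "r \<le> s"
    then show "y1 r \<le> y1 s" using y1t psi_mono_t[OF by1'] by auto
  qed
  have mono_scale: "mono_on {0..} (\<lambda>s. a2 * x s)" if "mono_on {0..} x" for x
    using that a(2) unfolding mono_on_def by (auto intro: mult_left_mono)
  have mono0: "mono_on {0..} (\<lambda>s. 0::real)" by (simp add: mono_on_def)
  have cy2: "continuous_on {0..} y2" unfolding y2_def
    by (rule psi_cont[OF cf(2) mono_scale[OF mx1]]) (simp add: hy2_def)
  have cy1': "continuous_on {0..} (psi hy1)"
    by (rule psi_cont[OF cf(2) mono_scale[OF mx2]]) (simp add: hy1_def)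
  have cy1: "continuous_on {0..} y1"
    by (rule continuous_on_cong[THEN iffD1, OF refl _ cy1']) (simp add: y1t)
  have chx1: "continuous_on {0..} hx1" unfolding hx1_def
    by (rule continuous_on_add[OF cf(1) continuous_on_mult_left[OF cy1]])
  have chx2: "continuous_on {0..} hx2" unfolding hx2_def
    by (rule continuous_on_add[OF cf(1) continuous_on_mult_left[OF cy2]])
  have cx1: "continuous_on {0..} x1" unfolding x1_def
    by (rule psi_cont[OF chx1 mono0]) simp
  have cx2: "continuous_on {0..} x2" unfolding x2_def
    by (rule psi_cont[OF chx2 mono0]) simp
  have chy2: "continuous_on {0..} hy2" unfolding hy2_def
    by (rule continuous_on_add[OF cf(2) continuous_on_mult_left[OF cx1]])
  have chy1: "continuous_on {0..} hy1" unfolding hy1_def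
    by (rule continuous_on_add[OF cf(2) continuous_on_mult_left[OF cx2]])
  define GA1 where "GA1 t = f1 t + x1 t + a1 * y1 t" for t
  define GA2 where "GA2 t = f2 t + a2 * x1 t + y2 t" for t
  define GB1 where "GB1 t = f1 t + x2 t + a1 * y2 t" for t
  define GB2 where "GB2 t = f2 t + a2 * x2 t + y1 t" for t
  have GA1e: "GA1 t = hx1 t + psi hx1 t" for t by (simp add: GA1_def hx1_def x1_def)
  have GA2e: "GA2 t = hy2 t + psi hy2 t" for t by (simp add: GA2_def hy2_def y2_def)
  have GB1e: "GB1 t = hx2 t + psi hx2 t" for t by (simp add: GB1_def hx2_def x2_def)
  have GB2e: "GB2 t = hy1 t + psi hy1 t" if "t \<ge> 0" for t using y1t[OF that] by (simp add: GB2_def hy1_def)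
  have GA1n: "GA1 t \<ge> 0" if "t \<ge> 0" for t using psi_ge'[OF bx1 that] GA1e[of t] by simp
  have GA2n: "GA2 t \<ge> 0" if "t \<ge> 0" for t using psi_ge'[OF by2' that] GA2e[of t] by simp
  have GB1n: "GB1 t \<ge> 0" if "t \<ge> 0" for t using psi_ge'[OF bx2 that] GB1e[of t] by simp
  have GB2n: "GB2 t \<ge> 0" if "t \<ge> 0" for t using psi_ge'[OF by1' that] GB2e[OF that] by simp
  have flA1: "x1 p = x1 q" if "0 \<le> p" "p \<le> q" "\<And>r. r \<in> {p..q} \<Longrightarrow> GA1 r > 0" for p q
    unfolding x1_def by (rule psi_flat[OF chx1 that(1,2)]) (use that(3) GA1e in auto)
  have flA2: "y2 p = y2 q" if "0 \<le> p" "p \<le> q" "\<And>r. r \<in> {p..q} \<Longrightarrow> GA2 r > 0" for p q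
    unfolding y2_def by (rule psi_flat[OF chy2 that(1,2)]) (use that(3) GA2e in auto)
  have flB1: "x2 p = x2 q" if "0 \<le> p" "p \<le> q" "\<And>r. r \<in> {p..q} \<Longrightarrow> GB1 r > 0" for p q
    unfolding x2_def by (rule psi_flat[OF chx2 that(1,2)]) (use that(3) GB1e in auto)
  have flB2: "y1 p = y1 q" if "0 \<le> p" "p \<le> q" "\<And>r. r \<in> {p..q} \<Longrightarrow> GB2 r > 0" for p q
  proof -
    have "psi hy1 p = psi hy1 q"
    proof (rule psi_flat[OF chy1 that(1,2)])
      fix r assume r: "r \<in> {p..q}"
      then show "hy1 r + psi hy1 r > 0" using that(3)[OF r] GB2e[of r] that(1) by auto
    qed
    then show ?thesis using y1t that by auto
  qed
  define \<delta> where "\<delta> t = x1 t - x2 t + a1 * (y1 t - y2 t)" for t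
  have dA1: "GA1 t - GB1 t = \<delta> t" for t by (simp add: GA1_def GB1_def \<delta>_def algebra_simps)
  have dA2: "GA2 t - GB2 t = a2 * \<delta> t" for t
  proof -
    have "a2 * \<delta> t = a2 * (x1 t - x2 t) + (a1 * a2) * (y1 t - y2 t)" by (simp add: \<delta>_def algebra_simps)
    then show ?thesis using a(1) by (simp add: GA2_def GB2_def algebra_simps)
  qed
  have c\<delta>: "continuous_on {0..} \<delta>" unfolding \<delta>_def
    by (intro continuous_on_add continuous_on_diff continuous_on_mult_left cx1 cx2 cy1 cy2)
  have x10: "x1 0 = 0" and x20: "x2 0 = 0" and y10: "y1 0 = 0" and y20: "y2 0 = 0"
  proof -
    have "y1 0 = psi hy1 0" using y1t by simp
    also have "\<dots> = 0" by (rule psi_zero) (use f0 x2n[of 0] a(2) in \<open>simp add: hy1_def\<close>)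
    finally show "y1 0 = 0" .
    show "y2 0 = 0" unfolding y2_def by (rule psi_zero) (use f0 x1n[of 0] a(2) in \<open>simp add: hy2_def\<close>)
    show "x1 0 = 0" unfolding x1_def by (rule psi_zero) (use f0 \<open>y1 0 = 0\<close> in \<open>simp add: hx1_def\<close>)
    show "x2 0 = 0" unfolding x2_def by (rule psi_zero) (use f0 \<open>y2 0 = 0\<close> in \<open>simp add: hx2_def\<close>)
  qed
  have \<delta>0: "\<delta> 0 = 0" using x10 x20 y10 y20 by (simp add: \<delta>_def)
  have \<delta>le: "\<delta> t \<le> 0" if t: "t \<ge> 0" for t
  proof (rule barrier[of 0 t \<delta> 0])
    show "continuous_on {0..t} \<delta>" by (rule continuous_on_subset[OF c\<delta>]) auto
    show "\<delta> 0 \<le> 0" using \<delta>0 by simp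
    show "t \<in> {0..t}" using t by simp
    fix p q assume pq: "0 \<le> p" "p \<le> q" "q \<le> t" and P: "\<And>z. z \<in> {p..q} \<Longrightarrow> \<delta> z > 0"
    have "x1 p = x1 q"
    proof (rule flA1[OF pq(1,2)])
      fix r assume r: "r \<in> {p..q}" then show "GA1 r > 0" using P[OF r] dA1[of r] GB1n[of r] pq by auto
    qed
    moreover have "y2 p = y2 q"
    proof (rule flA2[OF pq(1,2)])
      fix r assume r: "r \<in> {p..q}"
      have "a2 * \<delta> r > 0" using P[OF r] a(2) by simp
      then show "GA2 r > 0" using dA2[of r] GB2n[of r] pq r by auto
    qed
    moreover have "x2 p \<le> x2 q" using mx2 pq by (auto simp: mono_on_def)
    moreover have "y1 p \<le> y1 q" using my1 pq by (auto simp: mono_on_def)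
    moreover have "a1 * (y1 q - y1 p) \<le> 0" using a(3) \<open>y1 p \<le> y1 q\<close> by (simp add: mult_nonpos_nonneg)
    ultimately show "\<delta> q \<le> \<delta> p" unfolding \<delta>_def by (simp add: algebra_simps)
  qed
  have \<delta>ge: "- \<delta> t \<le> 0" if t: "t \<ge> 0" for t
  proof (rule barrier[of 0 t "\<lambda>t. - \<delta> t" 0])
    show "continuous_on {0..t} (\<lambda>t. - \<delta> t)" by (intro continuous_intros continuous_on_subset[OF c\<delta>]) auto
    show "- \<delta> 0 \<le> 0" using \<delta>0 by simp
    show "t \<in> {0..t}" using t by simp
    fix p q assume pq: "0 \<le> p" "p \<le> q" "q \<le> t" and P: "\<And>z. z \<in> {p..q} \<Longrightarrow> - \<delta> z > 0"
    have "x2 p = x2 q"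
    proof (rule flB1[OF pq(1,2)])
      fix r assume r: "r \<in> {p..q}" then show "GB1 r > 0" using P[OF r] dA1[of r] GA1n[of r] pq by auto
    qed
    moreover have "y1 p = y1 q"
    proof (rule flB2[OF pq(1,2)])
      fix r assume r: "r \<in> {p..q}"
      have "a2 * \<delta> r < 0" using P[OF r] a(2) by (simp add: mult_pos_neg)
      then show "GB2 r > 0" using dA2[of r] GA2n[of r] pq r by auto
    qed
    moreover have "x1 p \<le> x1 q" using mx1 pq by (auto simp: mono_on_def)
    moreover have "y2 p \<le> y2 q" using my2 pq by (auto simp: mono_on_def)
    moreover have "a1 * (y2 q - y2 p) \<le> 0" using a(3) \<open>y2 p \<le> y2 q\<close> by (simp add: mult_nonpos_nonneg)
    ultimately show "- \<delta> q \<le> - \<delta> p" unfolding \<delta>_def by (simp add: algebra_simps)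
  qed
  have \<delta>z: "\<delta> t = 0" if "t \<ge> 0" for t using \<delta>le[OF that] \<delta>ge[OF that] by simp
  define X where "X t = (x1 t + x2 t) / 2" for t
  define Y where "Y t = (y1 t + y2 t) / 2" for t
  define m where "m t = (X t, Y t)" for t
  define g where "g t = f t + mat_app2 1 a1 a2 1 (m t)" for t
  have g1: "fst (g t) = GA1 t" if "t \<ge> 0" for t
  proof -
    have "fst (g t) = (GA1 t + GB1 t) / 2"
      by (simp add: g_def m_def mat_app2_def X_def Y_def GA1_def GB1_def f1_def field_simps)
    then show ?thesis using dA1[of t] \<delta>z[OF that] by simp
  qed
  have g2: "snd (g t) = GA2 t" if "t \<ge> 0" for t
  proof -
    have "snd (g t) = (GA2 t + GB2 t) / 2"
      by (simp add: g_def m_def mat_app2_def X_def Y_def GA2_def GB2_def f2_def field_simps)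
    then show ?thesis using dA2[of t] \<delta>z[OF that] by simp
  qed
  have g1B: "fst (g t) = GB1 t" if "t \<ge> 0" for t using g1[OF that] dA1[of t] \<delta>z[OF that] by simp
  have g2B: "snd (g t) = GB2 t" if "t \<ge> 0" for t using g2[OF that] dA2[of t] \<delta>z[OF that] by simp
  have cX: "continuous_on {0..} X" unfolding X_def by (intro continuous_intros cx1 cx2) auto
  have cY: "continuous_on {0..} Y" unfolding Y_def by (intro continuous_intros cy1 cy2) auto
  have cm: "continuous_on {0..} m" unfolding m_def by (intro continuous_on_Pair cX cY)
  have cfp: "continuous_on {0..} f" using df unfolding driving_function_def by simp
  have cg: "continuous_on {0..} g" unfolding g_def mat_app2_def m_def fst_conv snd_conv
    by (intro continuous_on_add cfp continuous_on_Pair continuous_on_mult_left cX cY)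
  have mX: "mono_on {0..} X" using mx1 mx2 unfolding X_def mono_on_def by (auto intro: add_mono divide_right_mono)
  have mY: "mono_on {0..} Y" using my1 my2 unfolding Y_def mono_on_def by (auto intro: add_mono divide_right_mono)
  have cg1: "continuous_on {0..} (\<lambda>t. fst (g t))" using cg by (rule continuous_on_fst)
  have cg2: "continuous_on {0..} (\<lambda>t. snd (g t))" using cg by (rule continuous_on_snd)
  have st1: "stieltjes_nn (\<lambda>t. fst (g t)) (\<lambda>t. fst (m t)) = 0"
  proof (rule flat_imp_stieltjes)
    show "continuous_on {0..} (\<lambda>t. fst (m t))" using cX by (simp add: m_def)
    show "mono_on {0..} (\<lambda>t. fst (m t))" using mX by (simp add: m_def)
    show "continuous_on {0..} (\<lambda>t. fst (g t))" by (rule cg1)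
    fix p q assume pq: "0 \<le> p" "p \<le> q" and P: "\<And>r. r \<in> {p..q} \<Longrightarrow> fst (g r) > 0"
    have "x1 p = x1 q" by (rule flA1[OF pq]) (use P g1 pq in auto)
    moreover have "x2 p = x2 q" by (rule flB1[OF pq]) (use P g1B pq in auto)
    ultimately show "fst (m p) = fst (m q)" by (simp add: m_def X_def)
  qed
  have st2: "stieltjes_nn (\<lambda>t. snd (g t)) (\<lambda>t. snd (m t)) = 0"
  proof (rule flat_imp_stieltjes)
    show "continuous_on {0..} (\<lambda>t. snd (m t))" using cY by (simp add: m_def)
    show "mono_on {0..} (\<lambda>t. snd (m t))" using mY by (simp add: m_def)
    show "continuous_on {0..} (\<lambda>t. snd (g t))" by (rule cg2)
    fix p q assume pq: "0 \<le> p" "p \<le> q" and P: "\<And>r. r \<in> {p..q} \<Longrightarrow> snd (g r) > 0"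
    have "y2 p = y2 q" by (rule flA2[OF pq]) (use P g2 pq in auto)
    moreover have "y1 p = y1 q" by (rule flB2[OF pq]) (use P g2B pq in auto)
    ultimately show "snd (m p) = snd (m q)" by (simp add: m_def Y_def)
  qed
  have nn: "\<forall>t\<ge>0. nonneg2 (g t)" using g1 g2 GA1n GA2n by (auto simp: nonneg2_def)
  have m0: "m 0 = (0, 0)" by (simp add: m_def X_def Y_def x10 x20 y10 y20)
  have mX': "mono_on {0..} (\<lambda>t. fst (m t))" using mX by (simp add: m_def)
  have mY': "mono_on {0..} (\<lambda>t. snd (m t))" using mY by (simp add: m_def)
  have eqg: "\<forall>t\<ge>0. g t = f t + mat_app2 1 a1 a2 1 (m t)" by (simp add: g_def)
  have "skorokhod_solution 1 a1 a2 1 f g m"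
    unfolding skorokhod_solution_def using cg cm nn m0 mX' mY' eqg st1 st2 by blast
  then show ?thesis by blast
qed

end

theorem theorem3p2:
  fixes a1 a2 :: real and f :: "real \<Rightarrow> real \<times> real"
  assumes "\<bar>a1 * a2\<bar> = 1" and "a2 > 0" and "a1 < 0"
    and "driving_function f"
  shows "unique_skorokhod_solution 1 a1 a2 1 f"
proof -
  have "a1 * a2 < 0" using assms(2,3) by (simp add: mult_neg_pos)
  then have aa: "a1 * a2 = -1" using assms(1) by (simp add: abs_if split: if_splits)
  have U: "\<forall>g m g' m'. skorokhod_solution 1 a1 a2 1 f g m \<and> skorokhod_solution 1 a1 a2 1 f g' m' \<longrightarrow>
        (\<forall>t\<ge>0. g t = g' t \<and> m t = m' t)"
    using uniqueness[OF aa assms(2,3)] by blast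
  interpret ex_setup a1 a2 f using aa assms(2,3,4) by unfold_locales
  show ?thesis unfolding unique_skorokhod_solution_def
    using existence U by blast
qed

end
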